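(* Let $m\ge 1$ and $1\le k_1<k_2$ be integers with $k_1+1-m>0$, and let $L>0$, $C_{k_1}>0$, $C_{k_2}>0$ be real constants. For $h>0$ and $i=1,2$ set $$\beta_{k_i}(h)=\min\left(L,\;C_{k_i}h^{k_i+1-m}\right),$$ and let $X^{(k_1)}$, $X^{(k_2)}$ be independent random variables with $X^{(k_i)}$ uniformly distributed on $[0,\beta_{k_i}(h)]$. Define $$h^*_{k_1,k_2}=\left(\frac{C_{k_1}}{C_{k_2}}\right)^{\frac{1}{k_2-k_1}},\qquad \hslash_{k_i}=\left(\frac{L}{C_{k_i}}\right)^{\frac{1}{k_i+1-m}}\ (i=1,2),$$ and $\mathcal{P}_{k_1,k_2}(h)=\mathrm{Prob}\{X^{(k_1)}\le X^{(k_2)}\}$. Then: (i) If $h^*_{k_1,k_2}\ge\max(\hslash_{k_1},\hslash_{k_2})$, then $\hslash_{k_1}\le\hslash_{k_2}$ and $$\mathcal{P}_{k_1,k_2}(h)=\begin{cases}\dfrac12\left(\dfrac{h}{h^*_{k_1,k_2}}\right)^{k_2-k_1} & \text{if } 0< h\le\hslash_{k_1},\\[2mm] \dfrac12\left(\dfrac{h}{\hslash_{k_2}}\right)^{k_2+1-m} & \text{if } \hslash_{k_1}\le h\le\hslash_{k_2},\\[2mm] \dfrac12 & \text{if } h\ge\hslash_{k_2}.\end{cases}$$ (ii) If $h^*_{k_1,k_2}\le\min(\hslash_{k_1},\hslash_{k_2})$, then $\hslash_{k_2}\le\hslash_{k_1}$ and $$\mathcal{P}_{k_1,k_2}(h)=\begin{cases}\dfrac12\left(\dfrac{h}{h^*_{k_1,k_2}}\right)^{k_2-k_1}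 & \text{if } 0< h\le h^*_{k_1,k_2},\\[2mm] 1-\dfrac12\left(\dfrac{h^*_{k_1,k_2}}{h}\right)^{k_2-k_1} & \text{if } h^*_{k_1,k_2}\le h\le\hslash_{k_2},\\[2mm] 1-\dfrac12\left(\dfrac{h}{\hslash_{k_1}}\right)^{k_1+1-m} & \text{if } \hslash_{k_2}\le h\le\hslash_{k_1},\\[2mm] \dfrac12 & \text{if } h\ge\hslash_{k_1}.\end{cases}$$
   Context: In the paper, $h$ is the mesh size of a finite element mesh, $X^{(k_i)}=\|u-u_h^{(k_i)}\|_{m,p,\Omega}$ is the $W^{m,p}$ error of the $P_{k_i}$ Lagrange finite element approximation of the solution $u$ of a variational problem, $L=\|l\|_{V'}/\alpha^*$ comes from a priori stability bounds, and $C_{k_i}=\mathscr{C}_{k_i}|u|_{k_i+1,p,\Omega}$ comes from the interpolation error estimate, so that $\beta_{k_i}(h)$ is the resulting upper bound on the error; the two errors are modeled as independent uniform random variables on $[0,\beta_{k_i}(h)]$. *)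

theory Defs
  imports "HOL-Probability.Probability"
begin

definition beta_bound :: "real \<Rightarrow> real \<Rightarrow> nat \<Rightarrow> nat \<Rightarrow> real \<Rightarrow> real" where
  "beta_bound L C k m h = min L (C * h ^ (k + 1 - m))"

definition indep_uniform_pair ::
  "'a measure \<Rightarrow> ('a \<Rightarrow> real) \<Rightarrow> ('a \<Rightarrow> real) \<Rightarrow> real \<Rightarrow> real \<Rightarrow> bool" where
  "indep_uniform_pair M X1 X2 b1 b2 \<longleftrightarrow>
     prob_space M \<and> X1 \<in> borel_measurable M \<and> X2 \<in> borel_measurable M \<and>
     distr M lborel X1 = uniform_measure lborel {0..b1} \<and>
     distr M lborel X2 = uniform_measure lborel {0..b2} \<and>
     prob_space.indep_var M borel X1 borel X2"

definition prob_le :: "'a measure \<Rightarrow> ('a \<Rightarrow> real) \<Rightarrow> ('a \<Rightarrow> real) \<Rightarrow> real" where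
  "prob_le M X1 X2 = measure M {\<omega> \<in> space M. X1 \<omega> \<le> X2 \<omega>}"

end

theory Submission
  imports Defs
begin


lemma uprob: "a > 0 \<Longrightarrow> prob_space (uniform_measure lborel {0..a::real})"
  by (intro prob_space_uniform_measure) auto

lemma int_lin:
  fixes b c :: real assumes "0 \<le> c" "c \<le> b" "0 < b"
  shows "(\<integral>\<^sup>+x. ennreal ((b - x) / b) * indicator {0..c} x \<partial>lborel) = ennreal ((b*c - c^2/2)/b)"
proof -
  have hI: "((\<lambda>x. (b - x)/b) has_integral ((b*c - c^2/2)/b)) {0..c}"
  proof -
    have "((\<lambda>x. (b - x)/b) has_integral ((b*c - c^2/2)/b - (b*0 - 0^2/2)/b)) {0..c}"
      by (rule fundamental_theorem_of_calculus[OF assms(1)])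
         (use assms in \<open>auto intro!: derivative_eq_intros simp: power2_eq_square field_simps\<close>)
    then show ?thesis by simp
  qed
  then show ?thesis
    by (intro nn_integral_has_integral_lebesgue'[OF _ hI]) (use assms in auto)
qed

lemma prod_uniform:
  fixes a b :: real assumes a: "a > 0" and b: "b > 0"
  shows "emeasure (uniform_measure lborel {0..a} \<Otimes>\<^sub>M uniform_measure lborel {0..b})
           {p. fst p \<le> snd p} = ennreal (if a \<le> b then 1 - a/(2*b) else b/(2*a))"
proof -
  interpret Ub: prob_space "uniform_measure lborel {0..b}" using uprob[OF b] .
  define g where "g x = ennreal (max 0 (b - max 0 x) / b)" for x :: real
  have S: "{p::real\<times>real. fst p \<le> snd p} \<in> sets (uniform_measure lborel {0..a} \<Otimes>\<^sub>M uniform_measure lborel {0..b})"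
  proof -
    have "{p \<in> space (borel \<Otimes>\<^sub>M borel). fst p \<le> snd p} \<in> sets (borel \<Otimes>\<^sub>M (borel::real measure))"
      by measurable
    then show ?thesis by (simp add: space_pair_measure)
  qed
  have em: "emeasure (uniform_measure lborel {0..b}) (Pair x -` {p. fst p \<le> snd p}) = g x" for x
  proof -
    have "Pair x -` {p. fst p \<le> snd p} = {x..}" by auto
    moreover have "emeasure lborel ({0..b} \<inter> {x..}) = ennreal (max 0 (b - max 0 x))"
    proof -
      have "{0..b} \<inter> {x..} = {max 0 x..b}" by auto
      then show ?thesis by (simp add: emeasure_lborel_Icc_eq max_def)
    qed
    moreover have "ennreal (max 0 (b - max 0 x)) / ennreal b = g x"
      unfolding g_def using b by (intro divide_ennreal) auto
    ultimately show ?thesis using b by simp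
  qed
  have "emeasure (uniform_measure lborel {0..a} \<Otimes>\<^sub>M uniform_measure lborel {0..b}) {p. fst p \<le> snd p}
     = (\<integral>\<^sup>+x. g x \<partial>uniform_measure lborel {0..a})"
    by (subst Ub.emeasure_pair_measure_alt[OF S]) (simp only: em)
  also have "\<dots> = (\<integral>\<^sup>+x. g x * indicator {0..a} x \<partial>lborel) / ennreal a"
  proof -
    have "g \<in> borel_measurable borel" unfolding g_def by measurable
    then show ?thesis using a by (subst nn_integral_uniform_measure) auto
  qed
  also have "\<dots> = ennreal (if a \<le> b then 1 - a/(2*b) else b/(2*a))"
  proof (cases "a \<le> b")
    case True
    have "(\<integral>\<^sup>+x. g x * indicator {0..a} x \<partial>lborel) = (\<integral>\<^sup>+x. ennreal ((b - x) / b) * indicator {0..a} x \<partial>lborel)"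
      by (rule nn_integral_cong) (use True in \<open>auto simp: g_def indicator_def\<close>)
    also have "\<dots> = ennreal ((b*a - a^2/2)/b)" using True a b by (intro int_lin) auto
    finally show ?thesis using True a b
      by (simp add: divide_ennreal field_simps power2_eq_square)
  next
    case False
    have "(\<integral>\<^sup>+x. g x * indicator {0..a} x \<partial>lborel) = (\<integral>\<^sup>+x. ennreal ((b - x) / b) * indicator {0..b} x \<partial>lborel)"
      by (rule nn_integral_cong) (use False in \<open>auto simp: g_def indicator_def\<close>)
    also have "\<dots> = ennreal ((b*b - b^2/2)/b)" using False a b by (intro int_lin) auto
    finally show ?thesis using False a b
      by (simp add: divide_ennreal field_simps power2_eq_square)
  qed
  finally show ?thesis .
qed

lemma prob_le_uniform:
  fixes X1 X2 :: "'a \<Rightarrow> real"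
  assumes H: "indep_uniform_pair M X1 X2 a b" and a: "a > 0" and b: "b > 0"
  shows "prob_le M X1 X2 = (if a \<le> b then 1 - a/(2*b) else b/(2*a))"
proof -
  interpret prob_space M using H unfolding indep_uniform_pair_def by auto
  have m1[measurable]: "X1 \<in> borel_measurable M" and m2[measurable]: "X2 \<in> borel_measurable M"
    and d1: "distr M lborel X1 = uniform_measure lborel {0..a}"
    and d2: "distr M lborel X2 = uniform_measure lborel {0..b}"
    and ind: "indep_var borel X1 borel X2"
    using H unfolding indep_uniform_pair_def by auto
  have e1: "distr M borel X1 = uniform_measure lborel {0..a}"
    unfolding d1[symmetric] by (rule distr_cong) auto
  have e2: "distr M borel X2 = uniform_measure lborel {0..b}"
    unfolding d2[symmetric] by (rule distr_cong) auto
  have J: "distr M (borel \<Otimes>\<^sub>M borel) (\<lambda>x. (X1 x, X2 x)) =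
      uniform_measure lborel {0..a} \<Otimes>\<^sub>M uniform_measure lborel {0..b}"
    using ind unfolding indep_var_distribution_eq e1 e2 by simp
  have S: "{p::real\<times>real. fst p \<le> snd p} \<in> sets (borel \<Otimes>\<^sub>M borel)"
  proof -
    have "{p \<in> space (borel \<Otimes>\<^sub>M borel). fst p \<le> snd p} \<in> sets (borel \<Otimes>\<^sub>M (borel::real measure))"
      by measurable
    then show ?thesis by (simp add: space_pair_measure)
  qed
  have "prob_le M X1 X2 = measure M ((\<lambda>x. (X1 x, X2 x)) -` {p. fst p \<le> snd p} \<inter> space M)"
    unfolding prob_le_def by (rule arg_cong[where f="measure M"]) auto
  also have "\<dots> = measure (distr M (borel \<Otimes>\<^sub>M borel) (\<lambda>x. (X1 x, X2 x))) {p. fst p \<le> snd p}"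
    by (rule measure_distr[symmetric]) (use S in auto)
  also have "\<dots> = enn2real (ennreal (if a \<le> b then 1 - a/(2*b) else b/(2*a)))"
    unfolding J measure_def using prod_uniform[OF a b] by simp
  also have "\<dots> = (if a \<le> b then 1 - a/(2*b) else b/(2*a))"
    using a b by (auto simp: field_simps)
  finally show ?thesis .
qed

definition qf :: "real \<Rightarrow> real \<Rightarrow> real" where
  "qf a b = (if a \<le> b then 1 - a/(2*b) else b/(2*a))"

lemma qf_ge: "0 < b \<Longrightarrow> b \<le> a \<Longrightarrow> qf a b = b/(2*a)"
  unfolding qf_def by auto

lemma qf_le: "0 < a \<Longrightarrow> a \<le> b \<Longrightarrow> qf a b = 1 - a/(2*b)"
  unfolding qf_def by auto

lemma abstract:
  fixes L C1 C2 hs hb1 hb2 :: real and p1 d :: nat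
  assumes L: "L > 0" and C1: "C1 > 0" and C2: "C2 > 0" and hs: "hs > 0"
    and hb1: "hb1 > 0" and hb2: "hb2 > 0" and p1: "p1 > 0" and d: "d > 0"
    and hsd: "hs ^ d = C1 / C2" and hb1p: "hb1 ^ p1 = L / C1" and hb2p: "hb2 ^ (p1 + d) = L / C2"
  defines "Q \<equiv> \<lambda>h. qf (min L (C1 * h ^ p1)) (min L (C2 * h ^ (p1 + d)))"
  shows
    "(hs \<ge> max hb1 hb2 \<longrightarrow> hb1 \<le> hb2 \<and>
        (\<forall>h. h > 0 \<longrightarrow>
             (h \<le> hb1 \<longrightarrow> Q h = 1/2 * (h / hs) ^ d) \<and>
             (hb1 \<le> h \<and> h \<le> hb2 \<longrightarrow> Q h = 1/2 * (h / hb2) ^ (p1 + d)) \<and>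
             (h \<ge> hb2 \<longrightarrow> Q h = 1/2)))
     \<and>
     (hs \<le> min hb1 hb2 \<longrightarrow> hb2 \<le> hb1 \<and>
        (\<forall>h. h > 0 \<longrightarrow>
             (h \<le> hs \<longrightarrow> Q h = 1/2 * (h / hs) ^ d) \<and>
             (hs \<le> h \<and> h \<le> hb2 \<longrightarrow> Q h = 1 - 1/2 * (hs / h) ^ d) \<and>
             (hb2 \<le> h \<and> h \<le> hb1 \<longrightarrow> Q h = 1 - 1/2 * (h / hb1) ^ p1) \<and>
             (h \<ge> hb1 \<longrightarrow> Q h = 1/2)))"
proof -
  define p2 where "p2 = p1 + d"
  have p2: "p2 > 0" using p1 unfolding p2_def by simp
  define F where "F h = C1 * h ^ p1" for h :: real
  define G where "G h = C2 * h ^ p2" for h :: real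
  have Fpos: "F h > 0" if "h > 0" for h using that C1 by (simp add: F_def)
  have Gpos: "G h > 0" if "h > 0" for h using that C2 by (simp add: G_def)
  have FL: "F h = L * (h / hb1) ^ p1" for h
    using C1 hb1 L unfolding F_def power_divide hb1p by (simp add: field_simps)
  have GL: "G h = L * (h / hb2) ^ p2" for h
    using C2 hb2 L unfolding G_def power_divide p2_def hb2p by (simp add: field_simps)
  have GF: "G h = F h * (h / hs) ^ d" for h
    using C1 C2 hs unfolding G_def F_def power_divide p2_def hsd power_add by (simp add: field_simps)
  have pm: "x ^ n \<le> y ^ n \<longleftrightarrow> x \<le> y" if "0 \<le> x" "0 \<le> y" "n > 0" for x y :: real and n :: nat
    using power_mono_iff[OF that] .
  have F_le: "F h \<le> L \<longleftrightarrow> h \<le> hb1" if "h > 0" for h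
  proof -
    have "F h \<le> L \<longleftrightarrow> (h / hb1) ^ p1 \<le> 1 ^ p1" using FL[of h] L by simp
    also have "\<dots> \<longleftrightarrow> h / hb1 \<le> 1" using that hb1 p1 by (intro pm) auto
    finally show ?thesis using hb1 by simp
  qed
  have G_le: "G h \<le> L \<longleftrightarrow> h \<le> hb2" if "h > 0" for h
  proof -
    have "G h \<le> L \<longleftrightarrow> (h / hb2) ^ p2 \<le> 1 ^ p2" using GL[of h] L by simp
    also have "\<dots> \<longleftrightarrow> h / hb2 \<le> 1" using that hb2 p2 by (intro pm) auto
    finally show ?thesis using hb2 by simp
  qed
  have F_ge: "L \<le> F h \<longleftrightarrow> hb1 \<le> h" if "h > 0" for h
  proof -
    have "L \<le> F h \<longleftrightarrow> 1 ^ p1 \<le> (h / hb1) ^ p1" using FL[of h] L by simp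
    also have "\<dots> \<longleftrightarrow> 1 \<le> h / hb1" using that hb1 p1 by (intro pm) auto
    finally show ?thesis using hb1 by simp
  qed
  have G_ge: "L \<le> G h \<longleftrightarrow> hb2 \<le> h" if "h > 0" for h
  proof -
    have "L \<le> G h \<longleftrightarrow> 1 ^ p2 \<le> (h / hb2) ^ p2" using GL[of h] L by simp
    also have "\<dots> \<longleftrightarrow> 1 \<le> h / hb2" using that hb2 p2 by (intro pm) auto
    finally show ?thesis using hb2 by simp
  qed
  have GF_le: "G h \<le> F h \<longleftrightarrow> h \<le> hs" if "h > 0" for h
  proof -
    have "G h \<le> F h \<longleftrightarrow> (h / hs) ^ d \<le> 1 ^ d" using GF[of h] Fpos[OF that] by simp
    also have "\<dots> \<longleftrightarrow> h / hs \<le> 1" using that hs d by (intro pm) auto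
    finally show ?thesis using hs by simp
  qed
  have FG_le: "F h \<le> G h \<longleftrightarrow> hs \<le> h" if "h > 0" for h
  proof -
    have "F h \<le> G h \<longleftrightarrow> 1 ^ d \<le> (h / hs) ^ d" using GF[of h] Fpos[OF that] by simp
    also have "\<dots> \<longleftrightarrow> 1 \<le> h / hs" using that hs d by (intro pm) auto
    finally show ?thesis using hs by simp
  qed
  have Qe: "Q h = qf (min L (F h)) (min L (G h))" for h
    unfolding Q_def F_def G_def p2_def ..
  have r1: "G h / (2 * F h) = 1/2 * (h / hs) ^ d" if "h > 0" for h
    using GF[of h] Fpos[OF that] by simp
  have r2: "G h / (2 * L) = 1/2 * (h / hb2) ^ p2" for h
    using GL[of h] L by simp
  have r3: "F h / (2 * L) = 1/2 * (h / hb1) ^ p1" for h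
    using FL[of h] L by simp
  have r4: "F h / (2 * G h) = 1/2 * (hs / h) ^ d" if "h > 0" for h
    using GF[of h] Fpos[OF that] Gpos[OF that] that hs by (simp add: power_divide field_simps)
  have half: "qf L L = 1/2" using L by (simp add: qf_def)
  show ?thesis
  proof (intro conjI impI allI)
    assume A: "max hb1 hb2 \<le> hs"
    have "G hb1 \<le> F hb1" using GF_le[OF hb1] A by simp
    moreover have "F hb1 \<le> L" using F_le[OF hb1] by simp
    ultimately show "hb1 \<le> hb2" using G_le[OF hb1] by simp
    then have B: "hb1 \<le> hb2" .
    fix h :: real assume h: "h > 0"
    show "Q h = 1/2 * (h / hs) ^ d" if "h \<le> hb1"
    proof -
      have le: "F h \<le> L" "G h \<le> F h" using that F_le[OF h] GF_le[OF h] A by auto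
      show ?thesis unfolding Qe min_absorb2[OF le(1)] min_absorb2[OF order.trans[OF le(2) le(1)]] qf_ge[OF Gpos[OF h] le(2)] r1[OF h] p2_def[symmetric] by simp
    qed
    show "Q h = 1/2 * (h / hb2) ^ (p1 + d)" if "hb1 \<le> h \<and> h \<le> hb2"
    proof -
      have le: "L \<le> F h" "G h \<le> L" using that F_le[OF h] G_le[OF h] F_ge[OF h] G_ge[OF h] by auto
      show ?thesis unfolding Qe min_absorb1[OF le(1)] min_absorb2[OF le(2)] qf_ge[OF Gpos[OF h] le(2)] r2[of h] p2_def[symmetric] by simp
    qed
    show "Q h = 1/2" if "hb2 \<le> h"
    proof -
      have le: "L \<le> F h" "L \<le> G h" using that F_le[OF h] G_le[OF h] F_ge[OF h] G_ge[OF h] B by auto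
      show ?thesis unfolding Qe min_absorb1[OF le(1)] min_absorb1[OF le(2)] half p2_def[symmetric] by simp
    qed
  next
    assume A: "hs \<le> min hb1 hb2"
    have "F hb2 \<le> G hb2" using FG_le[OF hb2] A by simp
    moreover have "G hb2 \<le> L" using G_le[OF hb2] by simp
    ultimately show "hb2 \<le> hb1" using F_le[OF hb2] by simp
    then have B: "hb2 \<le> hb1" .
    fix h :: real assume h: "h > 0"
    show "Q h = 1/2 * (h / hs) ^ d" if "h \<le> hs"
    proof -
      have le: "F h \<le> L" "G h \<le> F h" using that F_le[OF h] GF_le[OF h] A by auto
      show ?thesis unfolding Qe min_absorb2[OF le(1)] min_absorb2[OF order.trans[OF le(2) le(1)]] qf_ge[OF Gpos[OF h] le(2)] r1[OF h] p2_def[symmetric] by simp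
    qed
    show "Q h = 1 - 1/2 * (hs / h) ^ d" if "hs \<le> h \<and> h \<le> hb2"
    proof -
      have le: "F h \<le> G h" "G h \<le> L" using that FG_le[OF h] G_le[OF h] by auto
      show ?thesis unfolding Qe min_absorb2[OF order.trans[OF le(1) le(2)]] min_absorb2[OF le(2)] qf_le[OF Fpos[OF h] le(1)] r4[OF h] p2_def[symmetric] by simp
    qed
    show "Q h = 1 - 1/2 * (h / hb1) ^ p1" if "hb2 \<le> h \<and> h \<le> hb1"
    proof -
      have le: "F h \<le> L" "L \<le> G h" using that F_le[OF h] G_le[OF h] F_ge[OF h] G_ge[OF h] by auto
      show ?thesis unfolding Qe min_absorb2[OF le(1)] min_absorb1[OF le(2)] qf_le[OF Fpos[OF h] le(1)] r3[of h] p2_def[symmetric] by simp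
    qed
    show "Q h = 1/2" if "hb1 \<le> h"
    proof -
      have le: "L \<le> F h" "L \<le> G h" using that F_le[OF h] G_le[OF h] F_ge[OF h] G_ge[OF h] B by auto
      show ?thesis unfolding Qe min_absorb1[OF le(1)] min_absorb1[OF le(2)] half p2_def[symmetric] by simp
    qed
  qed
qed



theorem theorem2:
  fixes m k1 k2 :: nat and L C1 C2 :: real
  assumes "m \<ge> 1" and "1 \<le> k1" and "k1 < k2" and "k1 + 1 > m"
    and "L > 0" and "C1 > 0" and "C2 > 0"
  defines "hs \<equiv> (C1 / C2) powr (1 / (real k2 - real k1))"
    and "hb1 \<equiv> (L / C1) powr (1 / (real k1 + 1 - real m))"
    and "hb2 \<equiv> (L / C2) powr (1 / (real k2 + 1 - real m))"
  shows
    "(hs \<ge> max hb1 hb2 \<longrightarrow>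
        hb1 \<le> hb2 \<and>
        (\<forall>h (M :: 'a measure) X1 X2. h > 0 \<longrightarrow>
           indep_uniform_pair M X1 X2 (beta_bound L C1 k1 m h) (beta_bound L C2 k2 m h) \<longrightarrow>
             (h \<le> hb1 \<longrightarrow> prob_le M X1 X2 = 1/2 * (h / hs) ^ (k2 - k1)) \<and>
             (hb1 \<le> h \<and> h \<le> hb2 \<longrightarrow> prob_le M X1 X2 = 1/2 * (h / hb2) ^ (k2 + 1 - m)) \<and>
             (h \<ge> hb2 \<longrightarrow> prob_le M X1 X2 = 1/2)))
     \<and>
     (hs \<le> min hb1 hb2 \<longrightarrow>
        hb2 \<le> hb1 \<and>
        (\<forall>h (M :: 'a measure) X1 X2. h > 0 \<longrightarrow>
           indep_uniform_pair M X1 X2 (beta_bound L C1 k1 m h) (beta_bound L C2 k2 m h) \<longrightarrow>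
             (h \<le> hs \<longrightarrow> prob_le M X1 X2 = 1/2 * (h / hs) ^ (k2 - k1)) \<and>
             (hs \<le> h \<and> h \<le> hb2 \<longrightarrow> prob_le M X1 X2 = 1 - 1/2 * (hs / h) ^ (k2 - k1)) \<and>
             (hb2 \<le> h \<and> h \<le> hb1 \<longrightarrow> prob_le M X1 X2 = 1 - 1/2 * (h / hb1) ^ (k1 + 1 - m)) \<and>
             (h \<ge> hb1 \<longrightarrow> prob_le M X1 X2 = 1/2)))"
  proof -
  define d where "d = k2 - k1"
  define p1 where "p1 = k1 + 1 - m"
  have d0: "d > 0" and p10: "p1 > 0" using assms(3,4) by (auto simp: d_def p1_def)
  have rd: "real k2 - real k1 = real d" using assms(3) by (simp add: d_def)
  have rp1: "real k1 + 1 - real m = real p1" using assms(4) by (simp add: p1_def)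
  have rp2: "real k2 + 1 - real m = real (p1 + d)" using assms(3,4) by (simp add: p1_def d_def)
  have np2: "k2 + 1 - m = p1 + d" using assms(3,4) by (simp add: p1_def d_def)
  have rt: "(x powr (1 / real n)) ^ n = x" if "x > 0" "n > 0" for x :: real and n :: nat
    using that by (simp add: powr_realpow[symmetric] powr_powr)
  have hsp: "hs > 0" "hs ^ d = C1 / C2"
    unfolding hs_def rd using assms(6,7) d0 by (auto intro: rt)
  have hb1p: "hb1 > 0" "hb1 ^ p1 = L / C1"
    unfolding hb1_def rp1 using assms(5,6) p10 by (auto intro: rt)
  have hb2p: "hb2 > 0" "hb2 ^ (p1 + d) = L / C2"
     apply (unfold hb2_def rp2)
    using assms(5,7) apply simp
    by (rule rt) (use assms(5,7) p10 in auto)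
  note abs = abstract[OF assms(5,6,7) hsp(1) hb1p(1) hb2p(1) p10 d0 hsp(2) hb1p(2) hb2p(2)]
  have key: "prob_le M X1 X2 = qf (min L (C1 * h ^ p1)) (min L (C2 * h ^ (p1 + d)))"
    if "h > 0" "indep_uniform_pair M X1 X2 (beta_bound L C1 k1 m h) (beta_bound L C2 k2 m h)"
    for h and M :: "'a measure" and X1 X2
  proof -
    have "beta_bound L C1 k1 m h = min L (C1 * h ^ p1)" "beta_bound L C2 k2 m h = min L (C2 * h ^ (p1 + d))"
      unfolding beta_bound_def p1_def np2 by simp_all
    moreover have "min L (C1 * h ^ p1) > 0" "min L (C2 * h ^ (p1 + d)) > 0"
      using assms(5,6,7) that(1) by auto
    ultimately show ?thesis
      using prob_le_uniform[OF that(2)] unfolding qf_def by simp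
  qed
  show ?thesis
    unfolding d_def[symmetric] np2 p1_def[symmetric]
    using abs by (auto simp: key)
qed

end
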